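(* Assume (B1)–(B3), that $f\in C^2$, that $\int_0^{+\infty}e^{-f(s)/(\beta+1)}ds<\infty$, and that $\lim_{t\to+\infty}g''(t)/g'(t)=0$ where $g=f^{-1}$. Then $I(u(\varepsilon_\rho s,\rho))\to\beta+1$ as $\rho\to+\infty$, uniformly for $s$ in compact subsets of $[0,\infty)$.
   Context: $L(u)(r)=r^{-\gamma}(r^{\alpha}|u'|^{\beta}u')'$, $\theta=\gamma+2+\beta-\alpha$. (B1) $f\in C^1(\mathbb R,\mathbb R)$, $f'>0$, $f\to+\infty$. (B2) $\lim_{u\to+\infty}u^{-1}e^{f(u)/(\beta+1)}=\lim_{u\to+\infty}uf'(u)=+\infty$. (B3) $\alpha>\beta+1>0$, $\theta>0$. $u(\cdot,\rho)$: solution on $[0,\infty)$ of $L(u)+e^{f(u)}=0$, $u(0)=\rho$, $u'(0)=0$. $\mathcal F(u)=\int_u^{\infty}e^{-f(s)/(\beta+1)}ds$, $\mathcal F_1(u)=(\beta+1)e^{-u/(\beta+1)}$, $\varepsilon_\rho=(\mathcal F(\rho)/\mathcal F_1(1))^{(\beta+1)/\theta}$, $I(u)=\mathcal F(u)f'(u)e^{f(u)/(\beta+1)}$. *)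

theory Defs
  imports "HOL-Analysis.Analysis"
begin

text \<open>u is a (radial) solution on [0,inf) of
  r^(-gamma) (r^alpha |u'|^beta u')' + e^(f u) = 0, u(0) = rho, u'(0) = 0.
  The derivative u' exists on [0,inf) (one-sided at 0), and the flux
  r^alpha |u'|^beta u' is differentiable for r > 0 with derivative -r^gamma e^(f(u(r))).\<close>
definition is_sol :: "real \<Rightarrow> real \<Rightarrow> real \<Rightarrow> (real \<Rightarrow> real) \<Rightarrow> (real \<Rightarrow> real) \<Rightarrow> real \<Rightarrow> bool" where
  "is_sol \<alpha> \<beta> \<gamma> f u \<rho> \<longleftrightarrow> u 0 = \<rho> \<and>
     (\<exists>u'. (\<forall>r\<ge>0. (u has_real_derivative u' r) (at r within {0..})) \<and> u' 0 = 0 \<and>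
        (\<forall>r>0. ((\<lambda>t. t powr \<alpha> * \<bar>u' t\<bar> powr \<beta> * u' t) has_real_derivative
                   (- (r powr \<gamma> * exp (f (u r))))) (at r)))"

definition FF :: "real \<Rightarrow> (real \<Rightarrow> real) \<Rightarrow> real \<Rightarrow> real" where
  "FF \<beta> f x = integral {x..} (\<lambda>s. exp (- f s / (\<beta> + 1)))"

definition FF1 :: "real \<Rightarrow> real \<Rightarrow> real" where
  "FF1 \<beta> x = (\<beta> + 1) * exp (- x / (\<beta> + 1))"

definition theta :: "real \<Rightarrow> real \<Rightarrow> real \<Rightarrow> real" where
  "theta \<alpha> \<beta> \<gamma> = \<gamma> + 2 + \<beta> - \<alpha>"

definition eps :: "real \<Rightarrow> real \<Rightarrow> real \<Rightarrow> (real \<Rightarrow> real) \<Rightarrow> real \<Rightarrow> real" where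
  "eps \<alpha> \<beta> \<gamma> f \<rho> = (FF \<beta> f \<rho> / FF1 \<beta> 1) powr ((\<beta> + 1) / theta \<alpha> \<beta> \<gamma>)"

definition II :: "real \<Rightarrow> (real \<Rightarrow> real) \<Rightarrow> real \<Rightarrow> real" where
  "II \<beta> f x = FF \<beta> f x * deriv f x * exp (f x / (\<beta> + 1))"

end

theory Submission
  imports Defs
begin


lemma lhopital_at_top_0:
  fixes f g f' g' :: "real \<Rightarrow> real"
  assumes f0: "(f \<longlongrightarrow> 0) at_top" and g0: "(g \<longlongrightarrow> 0) at_top"
    and gne: "eventually (\<lambda>x. g x \<noteq> 0) at_top"
    and g': "eventually (\<lambda>x. g' x \<noteq> 0) at_top"
    and Df: "eventually (\<lambda>x. DERIV f x :> f' x) at_top"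
    and Dg: "eventually (\<lambda>x. DERIV g x :> g' x) at_top"
    and lim: "((\<lambda> x. (f' x / g' x)) \<longlongrightarrow> y) at_top"
  shows "((\<lambda> x. f x / g x) \<longlongrightarrow> y) at_top"
  unfolding filterlim_at_top_to_right
proof (rule lhopital_right_0)
  let ?F = "\<lambda>x. f (inverse x)"
  let ?G = "\<lambda>x. g (inverse x)"
  let ?R = "at_right (0::real)"
  let ?D = "\<lambda>f' x. f' (inverse x) * - (inverse x ^ Suc (Suc 0))"
  show "(?G \<longlongrightarrow> 0) ?R"
    using g0 unfolding filterlim_at_top_to_right .
  show "(?F \<longlongrightarrow> 0) ?R"
    using f0 unfolding filterlim_at_top_to_right .
  show "eventually (\<lambda>x. ?G x \<noteq> 0) ?R"
    unfolding eventually_at_right_to_top using gne by simp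
  show "eventually (\<lambda>x. DERIV ?G x  :> ?D g' x) ?R"
    unfolding eventually_at_right_to_top
    using Dg eventually_ge_at_top[where c=1]
    by eventually_elim (rule derivative_eq_intros DERIV_chain'[where f=inverse] | simp)+
  show "eventually (\<lambda>x. DERIV ?F x  :> ?D f' x) ?R"
    unfolding eventually_at_right_to_top
    using Df eventually_ge_at_top[where c=1]
    by eventually_elim (rule derivative_eq_intros DERIV_chain'[where f=inverse] | simp)+
  show "eventually (\<lambda>x. ?D g' x \<noteq> 0) ?R"
    unfolding eventually_at_right_to_top
    using g' eventually_ge_at_top[where c=1]
    by eventually_elim auto
  show "((\<lambda>x. ?D f' x / ?D g' x) \<longlongrightarrow> y) ?R"
    unfolding filterlim_at_right_to_top
    apply (intro filterlim_cong[THEN iffD2, OF refl refl _ lim])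
    using eventually_ge_at_top[where c=1]
    by eventually_elim simp
qed



lemma h_lim:
  fixes f f' f'' :: "real \<Rightarrow> real"
  assumes f_deriv: "\<And>x. (f has_real_derivative f' x) (at x)"
    and f'_deriv: "\<And>x. (f' has_real_derivative f'' x) (at x)"
    and f'_pos: "\<And>x. f' x > 0"
    and f_top: "filterlim f at_top at_top"
    and g_lim: "((\<lambda>t. deriv (deriv (inv f)) t / deriv (inv f) t) \<longlongrightarrow> 0) at_top"
  shows "((\<lambda>x. f'' x / (f' x)^2) \<longlongrightarrow> 0) at_top"
proof -
  define g where "g = inv f"
  have mono: "strict_mono f"
    by (metis DERIV_pos_imp_increasing f_deriv f'_pos strict_monoI)
  hence inj: "inj f" by (rule strict_mono_imp_inj_on)
  have gf: "g (f x) = x" for x unfolding g_def by (simp add: inj)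
  have contf: "isCont f x" for x using f_deriv DERIV_isCont by blast
  have surj: "\<exists>x. f x = y" if "y > f 0" for y
  proof -
    from f_top have "eventually (\<lambda>x. f x \<ge> y) at_top" by (simp add: filterlim_at_top)
    then obtain N where N: "\<And>x. x \<ge> N \<Longrightarrow> f x \<ge> y" by (auto simp: eventually_at_top_linorder)
    define b where "b = max N 0"
    have b: "f b \<ge> y" "b \<ge> 0" using N[of b] by (auto simp: b_def)
    show ?thesis using IVT[of f 0 y b] b that contf by auto
  qed
  have fg: "f (g y) = y" if "y > f 0" for y
    using surj[OF that] gf by auto
  have Dg: "DERIV g t :> 1 / f' (g t)" if t: "t > f 0" for t
  proof -
    have "DERIV g t :> inverse (f' (g t))"
    proof (rule DERIV_inverse_function[where a="f 0" and b="t+1"])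
      show "DERIV f (g t) :> f' (g t)" by (rule f_deriv)
      show "f' (g t) \<noteq> 0" using f'_pos[of "g t"] by simp
      show "f 0 < t" "t < t + 1" using t by auto
      show "\<And>y. f 0 < y \<Longrightarrow> y < t + 1 \<Longrightarrow> f (g y) = y" using fg by auto
      have "isCont g (f (g t))"
        by (rule isCont_inverse_function[where d=1]) (auto simp: gf contf)
      thus "isCont g t" using fg[OF t] by simp
    qed
    thus ?thesis by (simp add: divide_inverse)
  qed
  have gpos: "g t > 0" if "t > f 0" for t
    using fg[OF that] that mono by (metis not_less_iff_gr_or_eq strict_mono_less)
  have dg: "deriv g t = 1 / f' (g t)" if "t > f 0" for t
    using Dg[OF that] DERIV_imp_deriv by blast
  have ddg: "deriv (deriv g) t = - f'' (g t) / (f' (g t))^3" if t: "t > f 0" for t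
  proof -
    have "DERIV (\<lambda>t. 1 / f' (g t)) t :> - f'' (g t) / (f' (g t))^3"
    proof -
      have "DERIV (\<lambda>t. f' (g t)) t :> f'' (g t) * (1 / f' (g t))"
        by (rule DERIV_chain2[OF f'_deriv Dg[OF t]])
      then have "DERIV (\<lambda>t. 1 / f' (g t)) t :> - (f'' (g t) * (1 / f' (g t))) / (f' (g t))^2"
        using f'_pos[of "g t"] by (auto intro!: derivative_eq_intros simp: power2_eq_square)
      thus ?thesis using f'_pos[of "g t"]
        by (simp add: power2_eq_square power3_eq_cube field_simps)
    qed
    moreover have "eventually (\<lambda>s. deriv g s = 1 / f' (g s)) (nhds t)"
    proof -
      have "eventually (\<lambda>s. s \<in> {f 0<..}) (nhds t)"
        by (rule eventually_nhds_in_open) (use t in auto)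
      thus ?thesis by eventually_elim (rule dg, simp)
    qed
    ultimately have "DERIV (deriv g) t :> - f'' (g t) / (f' (g t))^3"
      using DERIV_cong_ev[OF refl _ refl, where f="deriv g" and g="\<lambda>t. 1 / f' (g t)"] by blast
    thus ?thesis by (rule DERIV_imp_deriv)
  qed
  have "((\<lambda>x. deriv (deriv g) (f x) / deriv g (f x)) \<longlongrightarrow> 0) at_top"
    using filterlim_compose[OF g_lim[folded g_def] f_top] by (simp add: o_def)
  moreover have "eventually (\<lambda>x. deriv (deriv g) (f x) / deriv g (f x) = - (f'' x / (f' x)^2)) at_top"
  proof -
    have "eventually (\<lambda>x::real. x > 0) at_top" by (rule eventually_gt_at_top)
    thus ?thesis
    proof eventually_elim
      case (elim x)
      hence fx: "f x > f 0" using mono strict_mono_less by blast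
      have a: "deriv (deriv g) (f x) = - f'' x / (f' x)^3" using ddg[OF fx] gf[of x] by simp
      have b: "deriv g (f x) = 1 / f' x" using dg[OF fx] gf[of x] by simp
      show ?case unfolding a b using f'_pos[of x]
        by (simp add: power2_eq_square power3_eq_cube field_simps)
    qed
  qed
  ultimately have "((\<lambda>x. - (f'' x / (f' x)^2)) \<longlongrightarrow> 0) at_top"
    by (rule Lim_transform_eventually)
  from tendsto_minus[OF this] show ?thesis by simp
qed



lemma I_lim:
  fixes f f' f'' :: "real \<Rightarrow> real" and \<beta> :: real
  assumes f_deriv: "\<And>x. (f has_real_derivative f' x) (at x)"
    and f'_deriv: "\<And>x. (f' has_real_derivative f'' x) (at x)"
    and f'_pos: "\<And>x. f' x > 0"
    and B2a: "filterlim (\<lambda>x. exp (f x / (\<beta> + 1)) / x) at_top at_top"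
    and B2b: "filterlim (\<lambda>x. x * f' x) at_top at_top"
    and B3b: "\<beta> + 1 > 0"
    and integr: "(\<lambda>s. exp (- f s / (\<beta> + 1))) integrable_on {0..}"
    and hlim: "((\<lambda>x. f'' x / (f' x)^2) \<longlongrightarrow> 0) at_top"
  shows "((\<lambda>x. II \<beta> f x) \<longlongrightarrow> \<beta> + 1) at_top"
proof -
  define c where "c = \<beta> + 1"
  have c: "c > 0" using B3b c_def by simp
  define E where "E = (\<lambda>s. exp (- f s / c))"
  have contf: "continuous_on UNIV f"
    using f_deriv by (meson DERIV_isCont continuous_at_imp_continuous_on)
  have contE: "continuous_on S E" for S
    unfolding E_def using c by (intro continuous_intros continuous_on_subset[OF contf]) auto
  have Epos: "E x > 0" for x unfolding E_def by simp
  have intE: "E integrable_on {0..}" using integr by (simp add: E_def c_def)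
  have absE: "set_integrable lebesgue {0..} E"
    by (rule nonnegative_absolutely_integrable_1[OF intE]) (simp add: less_imp_le[OF Epos])
  have absE': "set_integrable lebesgue {a..} E" if "a \<ge> 0" for a
    by (rule set_integrable_subset[OF absE]) (use that in auto)
  have intE': "E integrable_on {a..}" if "a \<ge> 0" for a
    using set_lebesgue_integral_eq_integral(1)[OF absE'[OF that]] .
  have split: "integral {a..} E = integral {a..b} E + integral {b..} E" if "0 \<le> a" "a \<le> b" for a b
  proof -
    have "(E has_integral (integral {a..b} E + integral {b..} E)) ({a..b} \<union> {b..})"
    proof (rule has_integral_Un)
      show "(E has_integral integral {a..b} E) {a..b}"
        by (rule integrable_integral, rule integrable_continuous_interval, rule contE)
      show "(E has_integral integral {b..} E) {b..}"
        by (rule integrable_integral, rule intE') (use that in auto)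
      have "{a..b} \<inter> {b..} \<subseteq> {b}" by auto
      thus "negligible ({a..b} \<inter> {b..})" using negligible_subset by blast
    qed
    moreover have "{a..b} \<union> {b..} = {a..}" using that by auto
    ultimately show ?thesis by (simp add: integral_unique)
  qed
  have FF_eq: "FF \<beta> f x = integral {x..} E" for x
    unfolding FF_def E_def c_def by simp
  have F0: "((\<lambda>x. FF \<beta> f x) \<longlongrightarrow> 0) at_top"
  proof -
    have "((\<lambda>b. set_lebesgue_integral lebesgue {0..b} E) \<longlongrightarrow> set_lebesgue_integral lebesgue {0..} E) at_top"
      by (rule tendsto_set_lebesgue_integral_at_top[OF _ absE]) auto
    moreover have "set_lebesgue_integral lebesgue {0..b} E = integral {0..b} E" if "b \<ge> 0" for b
      by (rule set_lebesgue_integral_eq_integral(2), rule set_integrable_subset[OF absE]) auto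
    moreover have "set_lebesgue_integral lebesgue {0..} E = integral {0..} E"
      by (rule set_lebesgue_integral_eq_integral(2)[OF absE])
    ultimately have L: "((\<lambda>b. integral {0..b} E) \<longlongrightarrow> integral {0..} E) at_top"
      by (metis (mono_tags, lifting) eventually_at_top_linorder tendsto_cong)
    have "((\<lambda>b. integral {0..} E - integral {0..b} E) \<longlongrightarrow> integral {0..} E - integral {0..} E) at_top"
      by (intro tendsto_intros L)
    moreover have "eventually (\<lambda>b. integral {0..} E - integral {0..b} E = FF \<beta> f b) at_top"
      using eventually_ge_at_top[of "0::real"]
      by eventually_elim (simp add: FF_eq split)
    ultimately show ?thesis by (simp add: Lim_transform_eventually)
  qed
  have DF: "DERIV (\<lambda>v. FF \<beta> f v) x :> - E x" if x: "x > 0" for x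
  proof -
    have "((\<lambda>v. integral {v..x+1} E) has_real_derivative - E x) (at x within {0..x+1})"
      by (rule integral_has_real_derivative', rule contE) (use x in auto)
    moreover have "at x within {0..x+1} = at x" using x by (intro at_within_Icc_at) auto
    ultimately have "((\<lambda>v. integral {v..x+1} E + integral {x+1..} E) has_real_derivative - E x) (at x)"
      by (auto intro!: derivative_eq_intros)
    thus ?thesis
    proof (rule has_field_derivative_transform_within_open[where S="{0<..<x+1}"])
      show "open {0<..<x+1}" by simp
      show "x \<in> {0<..<x+1}" using x by simp
      fix y assume "y \<in> {0<..<x + 1::real}"
      thus "integral {y..x + 1} E + integral {x + 1..} E = FF \<beta> f y"
        using split[of y "x+1"] by (simp add: FF_eq)
    qed
  qed
  define h where "h = (\<lambda>x. f'' x / (f' x)^2)"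
  define D where "D = (\<lambda>x. E x / f' x)"
  have DD: "DERIV D x :> - E x * (1 / c + h x)" for x
  proof -
    have "DERIV D x :> (exp (- f x / c) * (- f' x / c) * f' x - exp (- f x / c) * f'' x) / (f' x * f' x)"
      unfolding D_def E_def using f'_pos[of x] c
      by (auto intro!: derivative_eq_intros f_deriv f'_deriv)
    moreover have "(exp (- f x / c) * (- f' x / c) * f' x - exp (- f x / c) * f'' x) / (f' x * f' x)
       = - E x * (1 / c + h x)"
      unfolding E_def h_def using f'_pos[of x] c
      by (simp add: field_simps power2_eq_square)
    ultimately show ?thesis by simp
  qed
  have D0: "(D \<longlongrightarrow> 0) at_top"
  proof -
    have "((\<lambda>x. inverse (exp (f x / c) / x) * inverse (x * f' x)) \<longlongrightarrow> 0 * 0) at_top"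
      by (intro tendsto_mult tendsto_inverse_0_at_top) (use B2a B2b in \<open>simp_all add: c_def\<close>)
    moreover have "eventually (\<lambda>x. inverse (exp (f x / c) / x) * inverse (x * f' x) = D x) at_top"
      using eventually_gt_at_top[of "0::real"]
    proof eventually_elim
      case (elim x)
      thus ?case using f'_pos[of x] unfolding D_def E_def
        by (simp add: field_simps exp_minus exp_diff)
    qed
    ultimately show ?thesis by (simp add: Lim_transform_eventually)
  qed
  have hl: "(h \<longlongrightarrow> 0) at_top" using hlim h_def by simp
  have lim1: "((\<lambda>x. 1 / (1 / c + h x)) \<longlongrightarrow> 1 / (1 / c + 0)) at_top"
    by (intro tendsto_intros hl) (use c in simp)
  have ne: "eventually (\<lambda>x. 1 / c + h x \<noteq> 0) at_top"
  proof (rule tendsto_imp_eventually_ne[of _ "1/c"])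
    show "((\<lambda>z. 1 / c + h z) \<longlongrightarrow> 1 / c) at_top"
      using tendsto_add[OF tendsto_const hl, of "1/c"] by simp
  qed (use c in simp)
  have "((\<lambda>x. FF \<beta> f x / D x) \<longlongrightarrow> c) at_top"
  proof (rule lhopital_at_top_0[OF F0 D0])
    show "eventually (\<lambda>x. D x \<noteq> 0) at_top"
      using Epos f'_pos by (intro always_eventually allI) (metis D_def divide_eq_0_iff less_irrefl)
    show "eventually (\<lambda>x. - E x * (1 / c + h x) \<noteq> 0) at_top"
      using ne by eventually_elim (metis Epos mult_eq_0_iff neg_equal_0_iff_equal less_irrefl)
    show "eventually (\<lambda>x. DERIV (\<lambda>v. FF \<beta> f v) x :> - E x) at_top"
      using eventually_gt_at_top[of "0::real"] by eventually_elim (rule DF)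
    show "eventually (\<lambda>x. DERIV D x :> - E x * (1 / c + h x)) at_top"
      by (intro always_eventually allI DD)
    show "((\<lambda>x. - E x / (- E x * (1 / c + h x))) \<longlongrightarrow> c) at_top"
    proof -
      have "(\<lambda>x. - E x / (- E x * (1 / c + h x))) = (\<lambda>x. 1 / (1 / c + h x))"
        using Epos by (auto intro!: ext simp: less_imp_neq[symmetric])
      thus ?thesis using lim1 c by simp
    qed
  qed
  moreover have "FF \<beta> f x / D x = II \<beta> f x" for x
  proof -
    have "deriv f x = f' x" using f_deriv DERIV_imp_deriv by blast
    moreover have "E x * exp (f x / c) = 1" unfolding E_def by (simp add: exp_add[symmetric])
    ultimately show ?thesis using Epos[of x] f'_pos[of x]
      unfolding II_def D_def c_def[symmetric]
      by (simp add: field_simps)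
  qed
  ultimately show ?thesis by (simp add: c_def)
qed



lemma mono_from_deriv:
  fixes w w' :: "real \<Rightarrow> real"
  assumes ab: "a \<le> b" and cont: "continuous_on {a..b} w"
    and D: "\<And>x. a < x \<Longrightarrow> x < b \<Longrightarrow> DERIV w x :> w' x"
    and nn: "\<And>x. a < x \<Longrightarrow> x < b \<Longrightarrow> w' x \<ge> 0"
  shows "w a \<le> w b"
proof (cases "a = b")
  case False
  hence "a < b" using ab by simp
  from MVT[OF this cont] obtain l z where lz: "a < z" "z < b" "DERIV w z :> l" "w b - w a = (b - a) * l"
    using D real_differentiable_def by blast
  have "l = w' z" using DERIV_unique[OF lz(3) D[OF lz(1,2)]] .
  hence "l \<ge> 0" using nn lz by simp
  thus ?thesis using lz(4) \<open>a < b\<close> by (smt (verit) mult_nonneg_nonneg)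
qed simp

lemma phi_small:
  fixes z w \<alpha> \<beta> :: real
  assumes "z > 0" "\<bar>w\<bar> \<le> 1" "\<beta> + 1 > 0" "\<alpha> > 0"
  shows "\<bar>z powr \<alpha> * \<bar>w\<bar> powr \<beta> * w\<bar> \<le> z powr \<alpha>"
proof (cases "w = 0")
  case False
  have "\<bar>w\<bar> powr \<beta> * \<bar>w\<bar> = \<bar>w\<bar> powr (\<beta> + 1)"
    using False by (simp add: powr_add)
  also have "\<dots> \<le> 1" using assms by (intro powr_le1) auto
  finally have 1: "\<bar>w\<bar> powr \<beta> * \<bar>w\<bar> \<le> 1" .
  have "\<bar>z powr \<alpha> * \<bar>w\<bar> powr \<beta> * w\<bar> = z powr \<alpha> * (\<bar>w\<bar> powr \<beta> * \<bar>w\<bar>)"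
    by (simp add: abs_mult)
  also have "\<dots> \<le> z powr \<alpha> * 1" by (rule mult_left_mono[OF 1]) simp
  finally show ?thesis by simp
qed simp

lemma ode_bound:
  fixes \<alpha> \<beta> \<gamma> \<rho> :: real and f f' v :: "real \<Rightarrow> real"
  assumes f_deriv: "\<And>x. (f has_real_derivative f' x) (at x)"
    and f'_pos: "\<And>x. f' x > 0"
    and B3a: "\<alpha> > \<beta> + 1" and B3b: "\<beta> + 1 > 0" and th: "\<gamma> + 2 + \<beta> - \<alpha> > 0"
    and sol: "is_sol \<alpha> \<beta> \<gamma> f v \<rho>"
    and r: "r \<ge> 0"
  shows "\<rho> - ((exp (f \<rho>) / (\<gamma> + 1)) powr (1 / (\<beta> + 1))) * r powr ((\<gamma> + 2 + \<beta> - \<alpha>) / (\<beta> + 1))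
            / ((\<gamma> + 2 + \<beta> - \<alpha>) / (\<beta> + 1)) \<le> v r"
    and "v r \<le> \<rho>"
proof -
  define c where "c = \<beta> + 1"
  have c: "c > 0" using B3b c_def by simp
  have \<alpha>: "\<alpha> > 0" using B3a B3b by simp
  have \<gamma>: "\<gamma> + 1 > 0" using B3a th by simp
  define p where "p = (\<gamma> + 2 + \<beta> - \<alpha>) / (\<beta> + 1)"
  have p: "p > 0" using th B3b p_def by simp
  define K where "K = exp (f \<rho>)"
  define B where "B = (K / (\<gamma> + 1)) powr (1 / c)"
  note S = sol[unfolded is_sol_def]
  have v0: "v 0 = \<rho>" using S by (rule conjunct1)
  obtain u' where U: "(\<forall>r\<ge>0. (v has_real_derivative u' r) (at r within {0..})) \<and> u' 0 = 0 \<and>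
        (\<forall>r>0. ((\<lambda>t. t powr \<alpha> * \<bar>u' t\<bar> powr \<beta> * u' t) has_real_derivative
                   (- (r powr \<gamma> * exp (f (v r))))) (at r))"
    using S[THEN conjunct2] ..
  have Dw: "\<And>r. r \<ge> 0 \<Longrightarrow> (v has_real_derivative u' r) (at r within {0..})"
    using U by simp
  have u'0: "u' 0 = 0" using U by simp
  have Dphi: "\<And>r. r > 0 \<Longrightarrow> ((\<lambda>t. t powr \<alpha> * \<bar>u' t\<bar> powr \<beta> * u' t) has_real_derivative
                   (- (r powr \<gamma> * exp (f (v r))))) (at r)"
    using U by simp
  define \<phi> where "\<phi> = (\<lambda>t. t powr \<alpha> * \<bar>u' t\<bar> powr \<beta> * u' t)"
  have D1: "DERIV v t :> u' t" if "t > 0" for t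
  proof -
    have sub: "{0<..} \<subseteq> {0::real..}" by (simp add: subset_iff)
    have "(v has_real_derivative u' t) (at t within {0<..})"
      by (rule has_field_derivative_subset[OF Dw[OF less_imp_le[OF that]] sub])
    moreover have e: "at t within {0<..} = at t" by (rule at_within_open) (use that in simp_all)
    ultimately show ?thesis by (simp only: e)
  qed
  have cont: "continuous_on {0..} v"
    unfolding continuous_on_eq_continuous_within
  proof
    fix x :: real assume "x \<in> {0..}"
    thus "continuous (at x within {0..}) v" by (intro DERIV_continuous[OF Dw]) simp
  qed
  have contr: "continuous_on {0..r} v" for r
    by (rule continuous_on_subset[OF cont]) (simp add: subset_iff)
  have fmono: "f x \<le> f y" if "x \<le> y" for x y
    by (rule DERIV_nonneg_imp_nondecreasing[OF that]) (use f_deriv f'_pos less_imp_le in blast)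
  obtain d where d: "d > 0" "\<And>x. 0 < x \<Longrightarrow> x < d \<Longrightarrow> \<bar>v x - \<rho>\<bar> \<le> x"
  proof -
    have "((\<lambda>y. (v y - v 0) / (y - 0)) \<longlongrightarrow> 0) (at 0 within {0..})"
      using Dw[of 0] u'0 by (simp add: has_field_derivative_iff)
    hence "eventually (\<lambda>y. dist ((v y - v 0) / (y - 0)) 0 < 1) (at 0 within {0..})"
      by (rule tendstoD) simp
    then obtain d where d: "d > 0" "\<And>x. x \<in> {0..} \<Longrightarrow> x \<noteq> 0 \<Longrightarrow> dist x 0 < d \<Longrightarrow>
        dist ((v x - v 0) / (x - 0)) 0 < 1"
      unfolding eventually_at by blast
    show ?thesis
    proof (rule that[OF d(1)])
      fix x :: real assume x: "0 < x" "x < d"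
      hence "\<bar>(v x - \<rho>) / x\<bar> < 1" using d(2)[of x] v0 by simp
      thus "\<bar>v x - \<rho>\<bar> \<le> x" using x by (simp add: abs_div)
    qed
  qed
  have zsmall: "\<exists>z. 0 < z \<and> z < \<delta> \<and> \<bar>u' z\<bar> \<le> 1" if "0 < \<delta>" "\<delta> < d" for \<delta>
  proof -
    have "\<exists>l z. 0 < z \<and> z < \<delta> \<and> DERIV v z :> l \<and> v \<delta> - v 0 = (\<delta> - 0) * l"
    proof (rule MVT)
      show "0 < \<delta>" using that by simp
      show "continuous_on {0..\<delta>} v" by (rule contr)
      show "v differentiable (at x)" if "0 < x" "x < \<delta>" for x
        using D1[of x] that real_differentiable_def by blast
    qed
    then obtain l z where lz: "0 < z" "z < \<delta>" "DERIV v z :> l" "v \<delta> - v 0 = \<delta> * l" by auto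
    have "l = u' z" using DERIV_unique[OF lz(3) D1] lz by simp
    moreover have "\<bar>\<delta> * l\<bar> \<le> \<delta>" using d(2)[of \<delta>] that lz(4) v0 by simp
    hence "\<bar>l\<bar> \<le> 1" using that by (simp add: abs_mult)
    ultimately show ?thesis using lz by auto
  qed
  have phismall: "\<exists>z. 0 < z \<and> z < r \<and> \<bar>\<phi> z\<bar> \<le> \<eta>" if "r > 0" "\<eta> > 0" for r \<eta>
  proof -
    define \<delta> where "\<delta> = min (min r d) (\<eta> powr (1 / \<alpha>)) / 2"
    have \<delta>: "0 < \<delta>" "\<delta> < d" "\<delta> < r" "\<delta> < \<eta> powr (1 / \<alpha>)"
    proof -
      have "\<eta> powr (1 / \<alpha>) > 0" using that by simp
      thus "0 < \<delta>" "\<delta> < d" "\<delta> < r" "\<delta> < \<eta> powr (1 / \<alpha>)"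
        using that d unfolding \<delta>_def by linarith+
    qed
    obtain z where z: "0 < z" "z < \<delta>" "\<bar>u' z\<bar> \<le> 1" using zsmall[OF \<delta>(1,2)] by blast
    have "\<bar>\<phi> z\<bar> \<le> z powr \<alpha>" unfolding \<phi>_def by (rule phi_small) (use z B3b \<alpha> in auto)
    also have "z powr \<alpha> \<le> (\<eta> powr (1 / \<alpha>)) powr \<alpha>"
      using z \<delta> \<alpha> by (intro powr_mono2) simp_all
    also have "\<dots> = \<eta>" using \<alpha> that by (simp add: powr_powr)
    finally show ?thesis using z \<delta> by auto
  qed
  have phidec: "\<phi> b \<le> \<phi> a" if "0 < a" "a \<le> b" for a b
  proof (rule DERIV_nonpos_imp_nonincreasing[OF that(2)])
    fix x assume "a \<le> x" "x \<le> b"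
    hence "x > 0" using that by simp
    thus "\<exists>y. DERIV \<phi> x :> y \<and> y \<le> 0"
      using Dphi[of x] unfolding \<phi>_def by (intro exI[of _ "- (x powr \<gamma> * exp (f (v x)))"]) auto
  qed
  have phinp: "\<phi> r \<le> 0" if rp: "r > 0" for r
  proof (rule field_le_epsilon)
    fix e :: real assume "e > 0"
    obtain z where "0 < z" "z < r" "\<bar>\<phi> z\<bar> \<le> e" using phismall[OF rp \<open>e > 0\<close>] by blast
    thus "\<phi> r \<le> 0 + e" using phidec[of z r] by auto
  qed
  have u'np: "u' r \<le> 0" if "r > 0" for r
  proof (rule ccontr)
    assume "\<not> u' r \<le> 0"
    hence "\<phi> r > 0" unfolding \<phi>_def using that by simp
    thus False using phinp[OF that] by simp
  qed
  have vle: "v r \<le> \<rho>" if "r \<ge> 0" for r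
  proof -
    have "(\<lambda>t. - v t) 0 \<le> (\<lambda>t. - v t) r"
    proof (rule mono_from_deriv[where w'="\<lambda>t. - u' t" and w="\<lambda>t. - v t" and a=0 and b=r])
      show "0 \<le> r" by (rule that)
      show "continuous_on {0..r} (\<lambda>t. - v t)" by (intro continuous_intros contr)
      show "DERIV (\<lambda>t. - v t) x :> - u' x" if "0 < x" "x < r" for x
        using DERIV_minus[OF D1[of x]] that by simp
      show "0 \<le> - u' x" if "0 < x" "x < r" for x using u'np[of x] that by simp
    qed
    thus ?thesis using v0 by simp
  qed
  show "v r \<le> \<rho>" using vle[OF r] .
  have philow: "\<phi> r + K * r powr (\<gamma> + 1) / (\<gamma> + 1) \<ge> 0" if r: "r > 0" for r
  proof -
    define \<psi> where "\<psi> = (\<lambda>t. \<phi> t + K * t powr (\<gamma> + 1) / (\<gamma> + 1))"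
    have D\<psi>: "DERIV \<psi> t :> - (t powr \<gamma> * exp (f (v t))) + K * t powr \<gamma>" if "t > 0" for t
    proof -
      have "DERIV \<psi> t :> - (t powr \<gamma> * exp (f (v t))) + K * ((\<gamma> + 1) * t powr (\<gamma> + 1 - 1)) / (\<gamma> + 1)"
        unfolding \<psi>_def using Dphi[OF that] that unfolding \<phi>_def[symmetric]
        by (auto intro!: derivative_eq_intros)
      thus ?thesis using \<gamma> by simp
    qed
    show ?thesis
    proof (rule field_le_epsilon)
      fix e :: real assume "e > 0"
      obtain z where z: "0 < z" "z < r" "\<bar>\<phi> z\<bar> \<le> e" using phismall[OF r \<open>e > 0\<close>] by blast
      have "\<psi> z \<le> \<psi> r"
      proof (rule mono_from_deriv[where w'="\<lambda>t. - (t powr \<gamma> * exp (f (v t))) + K * t powr \<gamma>" and w=\<psi> and a=z and b=r])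
        show "z \<le> r" using z by simp
        have "\<forall>x\<in>{z..r}. isCont \<psi> x"
        proof
          fix x assume "x \<in> {z..r}"
          hence "x > 0" using z by simp
          thus "isCont \<psi> x" by (rule DERIV_isCont[OF D\<psi>])
        qed
        thus "continuous_on {z..r} \<psi>" by (rule continuous_at_imp_continuous_on)
        show "DERIV \<psi> x :> - (x powr \<gamma> * exp (f (v x))) + K * x powr \<gamma>" if "z < x" "x < r" for x
          using D\<psi> that z by simp
        fix x assume x: "z < x" "x < r"
        have "exp (f (v x)) \<le> K" unfolding K_def using fmono[OF vle[of x]] x z by simp
        hence "x powr \<gamma> * exp (f (v x)) \<le> x powr \<gamma> * K" by (intro mult_left_mono) auto
        thus "0 \<le> - (x powr \<gamma> * exp (f (v x))) + K * x powr \<gamma>" by (simp add: mult.commute)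
      qed
      moreover have "K * z powr (\<gamma> + 1) / (\<gamma> + 1) \<ge> 0" unfolding K_def using \<gamma> by simp
      ultimately show "0 \<le> \<phi> r + K * r powr (\<gamma> + 1) / (\<gamma> + 1) + e"
        using z unfolding \<psi>_def by linarith
    qed
  qed
  have u'bd: "- u' t \<le> B * t powr (p - 1)" if t: "t > 0" for t
  proof -
    define w where "w = - u' t"
    have w: "w \<ge> 0" using u'np[OF t] w_def by simp
    show ?thesis
    proof (cases "w = 0")
      case True thus ?thesis unfolding w_def B_def by simp
    next
      case False
      hence wp: "w > 0" using w by simp
      have "\<phi> t = - (t powr \<alpha> * w powr c)"
        unfolding \<phi>_def w_def c_def using wp by (simp add: powr_add w_def)
      hence "t powr \<alpha> * w powr c \<le> K * t powr (\<gamma> + 1) / (\<gamma> + 1)" using philow[OF t] by simp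
      hence "w powr c * t powr \<alpha> \<le> K * t powr (\<gamma> + 1) / (\<gamma> + 1)" by (simp add: mult.commute)
      hence "w powr c \<le> (K * t powr (\<gamma> + 1) / (\<gamma> + 1)) / t powr \<alpha>"
        using t by (subst pos_le_divide_eq) simp_all
      also have "\<dots> = (K / (\<gamma> + 1)) * (t powr (\<gamma> + 1) / t powr \<alpha>)" by simp
      also have "\<dots> = (K / (\<gamma> + 1)) * t powr (\<gamma> + 1 - \<alpha>)" using t by (simp add: powr_diff)
      finally have 1: "w powr c \<le> (K / (\<gamma> + 1)) * t powr (\<gamma> + 1 - \<alpha>)" .
      have "w = (w powr c) powr (1 / c)" using c wp by (simp add: powr_powr)
      also have "\<dots> \<le> ((K / (\<gamma> + 1)) * t powr (\<gamma> + 1 - \<alpha>)) powr (1 / c)"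
        using 1 c by (intro powr_mono2) auto
      also have "\<dots> = B * t powr (p - 1)"

      proof -
        have e1: "(\<gamma> + 1 - \<alpha>) * (1 / c) = p - 1" unfolding p_def c_def using B3b by (simp add: field_simps)
        have "((K / (\<gamma> + 1)) * t powr (\<gamma> + 1 - \<alpha>)) powr (1 / c)
             = (K / (\<gamma> + 1)) powr (1 / c) * (t powr (\<gamma> + 1 - \<alpha>)) powr (1 / c)"
          using \<gamma> t by (intro powr_mult; simp add: K_def)
        also have "\<dots> = B * t powr (p - 1)" unfolding B_def powr_powr e1 ..
        finally show ?thesis .
      qed
      finally show ?thesis unfolding w_def .
    qed
  qed
  show "\<rho> - ((exp (f \<rho>) / (\<gamma> + 1)) powr (1 / (\<beta> + 1))) * r powr ((\<gamma> + 2 + \<beta> - \<alpha>) / (\<beta> + 1))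
            / ((\<gamma> + 2 + \<beta> - \<alpha>) / (\<beta> + 1)) \<le> v r"
  proof -
    define W where "W = (\<lambda>t. v t + B * t powr p / p)"
    have "W 0 \<le> W r"
    proof (rule mono_from_deriv[where w'="\<lambda>t. u' t + B * t powr (p - 1)" and w=W and a=0 and b=r])
      show "0 \<le> r" using r .
      show "continuous_on {0..r} W" unfolding W_def using p
        by (intro continuous_intros contr continuous_on_powr') auto
      show "DERIV W x :> u' x + B * x powr (p - 1)" if "0 < x" "x < r" for x
      proof -
        have "DERIV W x :> u' x + B * (p * x powr (p - 1)) / p"
          unfolding W_def using that D1[of x] by (auto intro!: derivative_eq_intros)
        thus ?thesis using p by simp
      qed
      show "0 \<le> u' x + B * x powr (p - 1)" if "0 < x" "x < r" for x
        using u'bd[of x] that by simp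
    qed
    moreover have "W 0 = \<rho>" by (simp add: W_def v0)
    ultimately have "\<rho> - B * r powr p / p \<le> v r" by (simp add: W_def)
    thus ?thesis by (simp add: B_def K_def p_def c_def)
  qed
qed



theorem mainTheorem17:
  fixes \<alpha> \<beta> \<gamma> :: real and f f' f'' :: "real \<Rightarrow> real" and u :: "real \<Rightarrow> real \<Rightarrow> real"
  assumes f_deriv: "\<And>x. (f has_real_derivative f' x) (at x)"
    and f'_deriv: "\<And>x. (f' has_real_derivative f'' x) (at x)"
    and f''_cont: "continuous_on UNIV f''"
    and f'_pos: "\<And>x. f' x > 0"
    and f_top: "filterlim f at_top at_top"
    and B2a: "filterlim (\<lambda>x. exp (f x / (\<beta> + 1)) / x) at_top at_top"
    and B2b: "filterlim (\<lambda>x. x * f' x) at_top at_top"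
    and B3a: "\<alpha> > \<beta> + 1" and B3b: "\<beta> + 1 > 0" and B3c: "theta \<alpha> \<beta> \<gamma> > 0"
    and integr: "(\<lambda>s. exp (- f s / (\<beta> + 1))) integrable_on {0..}"
    and g_lim: "((\<lambda>t. deriv (deriv (inv f)) t / deriv (inv f) t) \<longlongrightarrow> 0) at_top"
    and sol: "\<And>\<rho>. is_sol \<alpha> \<beta> \<gamma> f (\<lambda>r. u r \<rho>) \<rho>"
  shows "\<And>K. compact K \<Longrightarrow> K \<subseteq> {0..} \<Longrightarrow>
           uniform_limit K (\<lambda>\<rho> s. II \<beta> f (u (eps \<alpha> \<beta> \<gamma> f \<rho> * s) \<rho>)) (\<lambda>s. \<beta> + 1) at_top"
proof -
  fix K :: "real set" assume Kc: "compact K" and K0: "K \<subseteq> {0..}"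
  define c where "c = \<beta> + 1"
  have c: "c > 0" using B3b c_def by simp
  have th: "\<gamma> + 2 + \<beta> - \<alpha> > 0" using B3c by (simp add: theta_def)
  have \<gamma>: "\<gamma> + 1 > 0" using B3a th by simp
  define p where "p = (\<gamma> + 2 + \<beta> - \<alpha>) / (\<beta> + 1)"
  have p: "p > 0" using th B3b p_def by simp
  have hl: "((\<lambda>x. f'' x / (f' x)^2) \<longlongrightarrow> 0) at_top"
    by (rule h_lim[OF f_deriv f'_deriv f'_pos f_top g_lim])
  have IL: "((\<lambda>x. II \<beta> f x) \<longlongrightarrow> c) at_top"
    unfolding c_def by (rule I_lim[OF f_deriv f'_deriv f'_pos B2a B2b B3b integr hl])
  have FFnn: "FF \<beta> f x \<ge> 0" for x
  proof (cases "(\<lambda>s. exp (- f s / (\<beta> + 1))) integrable_on {x..}")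
    case True thus ?thesis unfolding FF_def by (rule integral_nonneg) simp
  next
    case False thus ?thesis unfolding FF_def by (simp add: not_integrable_integral)
  qed
  have FF1: "FF1 \<beta> 1 > 0" unfolding FF1_def using B3b by simp
  have df: "deriv f x = f' x" for x using f_deriv DERIV_imp_deriv by blast
  have IInn: "II \<beta> f x \<ge> 0" for x
    unfolding II_def df using FFnn[of x] f'_pos[of x] by simp
  define M where "M = 1 / ((\<gamma> + 1) powr (1 / c) * FF1 \<beta> 1 * p)"
  have M: "M > 0" unfolding M_def using \<gamma> FF1 p by simp
  have key: "\<rho> - u (eps \<alpha> \<beta> \<gamma> f \<rho> * s) \<rho> \<le> M * (II \<beta> f \<rho> / f' \<rho>) * s powr p"
    if s: "s \<ge> 0" for \<rho> s
  proof -
    define r where "r = eps \<alpha> \<beta> \<gamma> f \<rho> * s"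
    have ep: "eps \<alpha> \<beta> \<gamma> f \<rho> \<ge> 0" unfolding eps_def by simp
    have r: "r \<ge> 0" using ep s r_def by simp
    have b: "\<rho> - ((exp (f \<rho>) / (\<gamma> + 1)) powr (1 / (\<beta> + 1))) * r powr p / p \<le> u r \<rho>"
      using ode_bound(1)[OF f_deriv f'_pos B3a B3b th sol r] unfolding p_def .
    have e1: "(exp (f \<rho>) / (\<gamma> + 1)) powr (1 / (\<beta> + 1)) = exp (f \<rho> / c) / (\<gamma> + 1) powr (1 / c)"
      by (simp add: powr_divide exp_powr_real c_def)
    have e2: "r powr p = (FF \<beta> f \<rho> / FF1 \<beta> 1) * s powr p"
    proof -
      have "r powr p = eps \<alpha> \<beta> \<gamma> f \<rho> powr p * s powr p"
        unfolding r_def using ep s by (simp add: powr_mult)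
      moreover have "eps \<alpha> \<beta> \<gamma> f \<rho> powr p = FF \<beta> f \<rho> / FF1 \<beta> 1"
      proof -
        have h: "(\<beta> + 1) / theta \<alpha> \<beta> \<gamma> * p = 1"
          unfolding p_def theta_def using B3b th by simp
        have "eps \<alpha> \<beta> \<gamma> f \<rho> powr p = (FF \<beta> f \<rho> / FF1 \<beta> 1) powr 1"
          unfolding eps_def powr_powr h ..
        also have "\<dots> = FF \<beta> f \<rho> / FF1 \<beta> 1" using FFnn[of \<rho>] FF1 by (intro powr_one) simp
        finally show ?thesis .
      qed
      ultimately show ?thesis by simp
    qed
    have e3: "exp (f \<rho> / c) * FF \<beta> f \<rho> = II \<beta> f \<rho> / f' \<rho>"
      unfolding II_def df c_def using f'_pos[of \<rho>] by (simp add: field_simps)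
    have "((exp (f \<rho>) / (\<gamma> + 1)) powr (1 / (\<beta> + 1))) * r powr p / p
        = M * (exp (f \<rho> / c) * FF \<beta> f \<rho>) * s powr p"
      unfolding e1 e2 M_def by (simp add: field_simps)
    with b e3 show ?thesis by (simp add: r_def)
  qed
  obtain S where S: "S \<ge> 0" "\<And>s. s \<in> K \<Longrightarrow> s \<le> S"
  proof -
    obtain a where a: "\<forall>x\<in>K. \<bar>x\<bar> \<le> a" using compact_imp_bounded[OF Kc] bounded_real by blast
    show ?thesis by (rule that[of "max a 0"]) (use a in force)+
  qed
  show "uniform_limit K (\<lambda>\<rho> s. II \<beta> f (u (eps \<alpha> \<beta> \<gamma> f \<rho> * s) \<rho>)) (\<lambda>s. \<beta> + 1) at_top"
    unfolding uniform_limit_iff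
  proof (intro allI impI)
    fix e :: real assume e: "e > 0"
    have "eventually (\<lambda>x. dist (II \<beta> f x) c < e) at_top" using IL e by (rule tendstoD)
    then obtain V where V: "\<And>x. x \<ge> V \<Longrightarrow> dist (II \<beta> f x) c < e"
      by (auto simp: eventually_at_top_linorder)
    have ev1: "eventually (\<lambda>x. II \<beta> f x < c + 1) at_top"
      using IL by (rule order_tendstoD) simp
    have ev2: "eventually (\<lambda>x. x * f' x \<ge> 2 * M * (c + 1) * S powr p) at_top"
      using B2b by (simp add: filterlim_at_top)
    have ev3: "eventually (\<lambda>x. x \<ge> max 1 (2 * V)) at_top" by (rule eventually_ge_at_top)
    show "eventually (\<lambda>\<rho>. \<forall>s\<in>K. dist (II \<beta> f (u (eps \<alpha> \<beta> \<gamma> f \<rho> * s) \<rho>)) (\<beta> + 1) < e) at_top"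
      using ev1 ev2 ev3
    proof eventually_elim
      case (elim \<rho>)
      have \<rho>: "\<rho> \<ge> 1" "\<rho> \<ge> 2 * V" using elim(3) by auto
      show ?case
      proof
        fix s assume sK: "s \<in> K"
        have s: "s \<ge> 0" "s \<le> S" using sK K0 S by auto
        have sp: "s powr p \<le> S powr p" using s p by (intro powr_mono2) auto
        have fp: "f' \<rho> > 0" by (rule f'_pos)
        have "\<rho> - u (eps \<alpha> \<beta> \<gamma> f \<rho> * s) \<rho> \<le> M * (II \<beta> f \<rho> / f' \<rho>) * s powr p"
          by (rule key[OF s(1)])
        also have "\<dots> \<le> M * ((c + 1) / f' \<rho>) * S powr p"
          using elim(1) sp M fp IInn[of \<rho>]
          by (intro mult_mono mult_left_mono divide_right_mono) auto
        also have "\<dots> \<le> \<rho> / 2"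
        proof -
          have "M * (c + 1) * S powr p \<le> \<rho> * f' \<rho> / 2" using elim(2) by simp
          thus ?thesis using fp by (simp add: field_simps)
        qed
        finally have "u (eps \<alpha> \<beta> \<gamma> f \<rho> * s) \<rho> \<ge> V" using \<rho> by simp
        thus "dist (II \<beta> f (u (eps \<alpha> \<beta> \<gamma> f \<rho> * s) \<rho>)) (\<beta> + 1) < e"
          using V c_def by simp
      qed
    qed
  qed
qed

end
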